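(* The set of synthetic flag positroids on $[n]$ equals the set of realizable flag positroids on $[n]$. Equivalently: a collection of subsets of $[n]$ is of the form $\{I\subseteq[n]: P_I(F)\neq 0\}$ for some $F\in\mathrm{Fl}_n^{\ge 0}$ if and only if it is of the form $\{I\subseteq[n]: P_I(F)\neq 0\}$ for some $F\in\mathrm{Fl}_n$ all of whose Plücker coordinates are nonnegative.
   Context: $\mathrm{Fl}_n$ is the real complete flag variety, flags represented by invertible $n\times n$ real matrices $M$ (the $i$-th subspace is the span of the top $i$ rows; representatives differ by left multiplication by invertible lower triangular matrices). $P_I(M)$ is the minor of $M$ in rows $1,\dots,|I|$ and columns $I$. "All Plücker coordinates of $F$ nonnegative" means some representing matrix has all $P_I\ge 0$. $\mathrm{Fl}_n^{\ge0}$ is the Euclidean closure of the set of flags having a totally positive representing matrix (all minors positive). A realizable flag positroid is the collection of indices of nonzero Plücker coordinates of a flag in $\mathrm{Fl}_n^{\ge 0}$ (a flag matroid); a synthetic flag positroid is the collection of indices of nonzero Plücker coordinates of a flag $F\in\mathrm{Fl}_n$ with $P_I(F)\ge 0$ for all $I\subseteq[n]$. *)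

theory Defs
  imports "HOL-Analysis.Analysis" "HOL-Combinatorics.Permutations"
begin

text \<open>Square n x n real matrices are represented as functions nat => nat => real,
  with indices 0..n-1 (only entries with i,j < n are meaningful).
  The ground set [n] is represented as {0..<n}.\<close>

type_synonym mat = "nat \<Rightarrow> nat \<Rightarrow> real"

definition mat_mult :: "nat \<Rightarrow> mat \<Rightarrow> mat \<Rightarrow> mat" where
  "mat_mult n A B = (\<lambda>i j. \<Sum>k<n. A i k * B k j)"

definition mat_id :: mat where
  "mat_id = (\<lambda>i j. if i = j then 1 else 0)"

definition mat_invertible :: "nat \<Rightarrow> mat \<Rightarrow> bool" where
  "mat_invertible n A \<longleftrightarrow> (\<exists>B. \<forall>i<n. \<forall>j<n.
      mat_mult n A B i j = mat_id i j \<and> mat_mult n B A i j = mat_id i j)"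

definition lower_triangular :: "nat \<Rightarrow> mat \<Rightarrow> bool" where
  "lower_triangular n L \<longleftrightarrow> (\<forall>i<n. \<forall>j<n. i < j \<longrightarrow> L i j = 0)"

definition minor_det :: "mat \<Rightarrow> nat \<Rightarrow> (nat \<Rightarrow> nat) \<Rightarrow> (nat \<Rightarrow> nat) \<Rightarrow> real" where
  "minor_det M k r c =
     (\<Sum>p | p permutes {0..<k}. of_int (sign p) * (\<Prod>i<k. M (r i) (c (p i))))"

text \<open>Pluecker coordinate P_I(M): minor in rows 1..|I| (here 0..|I|-1) and columns I
  (in increasing order).\<close>
definition plucker :: "mat \<Rightarrow> nat set \<Rightarrow> real" where
  "plucker M I = minor_det M (card I) (\<lambda>i. i) (\<lambda>j. sorted_list_of_set I ! j)"

definition totally_positive :: "nat \<Rightarrow> mat \<Rightarrow> bool" where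
  "totally_positive n M \<longleftrightarrow>
     (\<forall>R C. R \<subseteq> {0..<n} \<and> C \<subseteq> {0..<n} \<and> card R = card C \<and> R \<noteq> {} \<longrightarrow>
        minor_det M (card R) (\<lambda>i. sorted_list_of_set R ! i) (\<lambda>j. sorted_list_of_set C ! j) > 0)"

text \<open>Two invertible matrices represent the same flag iff they differ by left multiplication
  by an invertible lower triangular matrix.\<close>
definition same_flag :: "nat \<Rightarrow> mat \<Rightarrow> mat \<Rightarrow> bool" where
  "same_flag n M M' \<longleftrightarrow> (\<exists>L. mat_invertible n L \<and> lower_triangular n L \<and>
      (\<forall>i<n. \<forall>j<n. M' i j = mat_mult n L M i j))"

text \<open>The flag represented by M lies in Fl_n^{>=0}: the closure of the set of flags having a
  totally positive representative. Since GL_n -> Fl_n is an open quotient map, this means M is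
  an entrywise limit of matrices each representing a flag with a totally positive
  representative.\<close>
definition in_tnn_flag :: "nat \<Rightarrow> mat \<Rightarrow> bool" where
  "in_tnn_flag n M \<longleftrightarrow> mat_invertible n M \<and>
     (\<exists>X :: nat \<Rightarrow> mat. (\<forall>k. \<exists>N. totally_positive n N \<and> same_flag n N (X k)) \<and>
        (\<forall>i<n. \<forall>j<n. (\<lambda>k. X k i j) \<longlonglongrightarrow> M i j))"

definition nonzero_plucker :: "nat \<Rightarrow> mat \<Rightarrow> nat set set" where
  "nonzero_plucker n M = {I. I \<subseteq> {0..<n} \<and> plucker M I \<noteq> 0}"

definition realizable_flag_positroids :: "nat \<Rightarrow> nat set set set" where
  "realizable_flag_positroids n = {nonzero_plucker n M | M. in_tnn_flag n M}"

text \<open>Flags with all Pluecker coordinates nonnegative: some representative has all P_I >= 0.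
  (The set of nonzero coordinates does not depend on the representative.)\<close>
definition synthetic_flag_positroids :: "nat \<Rightarrow> nat set set set" where
  "synthetic_flag_positroids n = {nonzero_plucker n M | M. mat_invertible n M \<and>
      (\<exists>M'. same_flag n M M' \<and> (\<forall>I. I \<subseteq> {0..<n} \<longrightarrow> plucker M' I \<ge> 0))}"

end

theory Submission
  imports Defs "Jordan_Normal_Form.Determinant"
begin

definition sm :: "(nat \<Rightarrow> nat \<Rightarrow> real) \<Rightarrow> nat \<Rightarrow> (nat \<Rightarrow> nat) \<Rightarrow> (nat \<Rightarrow> nat) \<Rightarrow> real Matrix.mat" where
  "sm M k r c = Matrix.mat k k (\<lambda>(i,j). M (r i) (c j))"

lemma sm_carrier: "sm M k r c \<in> carrier_mat k k"
  unfolding sm_def by simp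

lemma minor_jnf: "minor_det M k r c = Determinant.det (sm M k r c)"
  unfolding minor_det_def Determinant.det_def sm_def
  by (auto intro!: sum.cong prod.cong simp: atLeast0LessThan permutes_in_image)

lemma minor_cong:
  assumes "\<And>i j. i < k \<Longrightarrow> j < k \<Longrightarrow> M (r i) (c j) = M' (r' i) (c' j)"
  shows "minor_det M k r c = minor_det M' k r' c'"
  unfolding minor_det_def
  by (intro sum.cong refl arg_cong2[where f="(*)"] prod.cong) (auto simp: assms permutes_in_image)

lemma minor_transpose: "minor_det M k r c = minor_det (\<lambda>i j. M j i) k c r"
proof -
  have "transpose_mat (sm M k r c) = sm (\<lambda>i j. M j i) k c r"
    unfolding sm_def by (rule eq_matI) auto
  then show ?thesis
    unfolding minor_jnf using det_transpose[OF sm_carrier, of M k r c] by simp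
qed

lemma minor_swap_rows:
  assumes "a < k" "b < k" "a \<noteq> b"
  shows "minor_det M k (r \<circ> Transposition.transpose a b) c = - minor_det M k r c"
proof -
  let ?p = "Transposition.transpose a b"
  have p: "?p permutes {0..<k}" using assms by (intro permutes_swap_id) auto
  have "Matrix.mat k k (\<lambda>(i,j). sm M k r c $$ (?p i, j)) = sm M k (r \<circ> ?p) c"
  proof -
    have pk: "\<And>i. i < k \<Longrightarrow> ?p i < k" using permutes_in_image[OF p] by auto
    show ?thesis unfolding sm_def by (rule eq_matI) (auto simp: pk)
  qed
  moreover have "Determinant.det (Matrix.mat k k (\<lambda>(i,j). sm M k r c $$ (?p i, j)))
      = of_int (sign ?p) * Determinant.det (sm M k r c)"
    by (rule det_permute_rows[OF sm_carrier p])
  ultimately show ?thesis using assms unfolding minor_jnf by (simp add: sign_swap_id)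
qed

lemma minor_swap_cols:
  assumes "a < k" "b < k" "a \<noteq> b"
  shows "minor_det M k r (c \<circ> Transposition.transpose a b) = - minor_det M k r c"
  using minor_swap_rows[OF assms, of "\<lambda>i j. M j i" c r] minor_transpose[of M k r] minor_transpose[of M k r "c \<circ> Transposition.transpose a b"]
  by simp

lemma minor_ident_rows:
  assumes "a < k" "b < k" "a \<noteq> b" "r a = r b"
  shows "minor_det M k r c = 0"
proof -
  have "Matrix.row (sm M k r c) a = Matrix.row (sm M k r c) b"
    unfolding sm_def using assms by (intro eq_vecI) auto
  then show ?thesis unfolding minor_jnf
    using det_identical_rows[OF sm_carrier assms(3,1,2)] by simp
qed

lemma minor_ident_cols:
  assumes "a < k" "b < k" "a \<noteq> b" "c a = c b"
  shows "minor_det M k r c = 0"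
  using minor_ident_rows[OF assms, of "\<lambda>i j. M j i" r] minor_transpose[of M k r c] by simp

lemma minor_id: "minor_det mat_id k (\<lambda>i. i) (\<lambda>i. i) = 1"
proof -
  have "sm mat_id k (\<lambda>i. i) (\<lambda>i. i) = 1\<^sub>m k"
    unfolding sm_def mat_id_def by (rule eq_matI) auto
  then show ?thesis unfolding minor_jnf by simp
qed

lemma minor_mult_rows:
  "minor_det (mat_mult n A Y) k r c =
     (\<Sum>f\<in>PiE {..<k} (\<lambda>_. {..<n}). (\<Prod>a<k. A (r a) (f a)) * minor_det Y k f c)"
proof -
  let ?F = "PiE {..<k} (\<lambda>_. {..<n})"
  let ?P = "{p. p permutes {0..<k}}"
  have "minor_det (mat_mult n A Y) k r c =
     (\<Sum>p\<in>?P. of_int (sign p) * (\<Prod>a<k. \<Sum>l<n. A (r a) l * Y l (c (p a))))"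
    unfolding minor_det_def mat_mult_def by simp
  also have "\<dots> = (\<Sum>p\<in>?P. of_int (sign p) * (\<Sum>f\<in>?F. \<Prod>a<k. A (r a) (f a) * Y (f a) (c (p a))))"
    by (subst prod_sum_PiE) auto
  also have "\<dots> = (\<Sum>p\<in>?P. \<Sum>f\<in>?F. (\<Prod>a<k. A (r a) (f a)) * (of_int (sign p) * (\<Prod>a<k. Y (f a) (c (p a)))))"
    by (simp add: sum_distrib_left prod.distrib mult_ac)
  also have "\<dots> = (\<Sum>f\<in>?F. \<Sum>p\<in>?P. (\<Prod>a<k. A (r a) (f a)) * (of_int (sign p) * (\<Prod>a<k. Y (f a) (c (p a)))))"
    by (rule sum.swap)
  also have "\<dots> = (\<Sum>f\<in>?F. (\<Prod>a<k. A (r a) (f a)) * minor_det Y k f c)"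
    unfolding minor_det_def by (simp add: sum_distrib_left)
  finally show ?thesis .
qed

lemma minor_mult_cols:
  "minor_det (mat_mult n Y B) k r c =
     (\<Sum>g\<in>PiE {..<k} (\<lambda>_. {..<n}). minor_det Y k r g * (\<Prod>b<k. B (g b) (c b)))"
proof -
  have eq: "(\<lambda>i j. mat_mult n Y B j i) = mat_mult n (\<lambda>i j. B j i) (\<lambda>i j. Y j i)"
    unfolding mat_mult_def by (auto simp: mult.commute)
  have "minor_det (mat_mult n Y B) k r c = minor_det (mat_mult n (\<lambda>i j. B j i) (\<lambda>i j. Y j i)) k c r"
    by (subst minor_transpose) (simp add: eq)
  also have "\<dots> = (\<Sum>g\<in>PiE {..<k} (\<lambda>_. {..<n}). (\<Prod>b<k. B (g b) (c b)) * minor_det (\<lambda>i j. Y j i) k g r)"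
    by (rule minor_mult_rows)
  also have "\<dots> = (\<Sum>g\<in>PiE {..<k} (\<lambda>_. {..<n}). minor_det Y k r g * (\<Prod>b<k. B (g b) (c b)))"
    by (intro sum.cong refl) (simp add: minor_transpose[of Y k r] mult.commute)
  finally show ?thesis .
qed

lemma mm_assoc: "mat_mult n (mat_mult n A B) C = mat_mult n A (mat_mult n B C)"
  unfolding mat_mult_def
  apply (rule ext, rule ext)
  apply (simp add: sum_distrib_left sum_distrib_right mult.assoc)
  apply (rule sum.swap)
  done

lemma mm_cong:
  assumes "\<And>l. l < n \<Longrightarrow> A i l = A' i l" "\<And>l. l < n \<Longrightarrow> B l j = B' l j"
  shows "mat_mult n A B i j = mat_mult n A' B' i j"
  unfolding mat_mult_def using assms by (intro sum.cong) auto

lemma mm_id_left: "i < n \<Longrightarrow> mat_mult n mat_id B i j = B i j"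
proof -
  assume i: "i < n"
  have eq: "(\<lambda>l. mat_id i l * B l j) = (\<lambda>l. if i = l then B i j else 0)"
    unfolding mat_id_def by auto
  show ?thesis unfolding mat_mult_def eq using i by simp
qed

lemma mm_id_right: "j < n \<Longrightarrow> mat_mult n B mat_id i j = B i j"
proof -
  assume j: "j < n"
  have eq: "(\<lambda>l. B i l * mat_id l j) = (\<lambda>l. if l = j then B i j else 0)"
    unfolding mat_id_def by auto
  show ?thesis unfolding mat_mult_def eq using j by simp
qed

lemma mm_left_idc:
  assumes "\<forall>i<n. \<forall>j<n. P i j = mat_id i j" "i < n"
  shows "mat_mult n P X i j = X i j"
proof -
  have "mat_mult n P X i j = mat_mult n mat_id X i j" using assms by (intro mm_cong) auto
  then show ?thesis using mm_id_left[OF assms(2)] by simp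
qed

lemma mm_right_idc:
  assumes "\<forall>i<n. \<forall>j<n. P i j = mat_id i j" "j < n"
  shows "mat_mult n X P i j = X i j"
proof -
  have "mat_mult n X P i j = mat_mult n X mat_id i j" using assms by (intro mm_cong) auto
  then show ?thesis using mm_id_right[OF assms(2)] by simp
qed

lemma inj_le_id:
  fixes f :: "nat \<Rightarrow> nat"
  assumes "\<forall>a<k. f a \<le> a" "inj_on f {..<k}"
  shows "a < k \<Longrightarrow> f a = a"
proof (induction a rule: less_induct)
  case (less a)
  show ?case
  proof (rule ccontr)
    assume ne: "f a \<noteq> a"
    then have lt: "f a < a" using assms(1) less.prems by (simp add: le_neq_implies_less)
    then have "f (f a) = f a" using less.IH less.prems by auto
    then have "f a = a" using assms(2) lt less.prems by (auto simp: inj_on_def)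
    with ne show False by simp
  qed
qed

lemma lt_minor:
  assumes L: "lower_triangular n L" and kn: "k \<le> n"
  shows "minor_det (mat_mult n L M) k (\<lambda>i. i) c = (\<Prod>a<k. L a a) * minor_det M k (\<lambda>i. i) c"
proof -
  let ?F = "PiE {..<k} (\<lambda>_. {..<n})"
  let ?f0 = "restrict (\<lambda>a. a) {..<k}"
  have f0: "?f0 \<in> ?F" using kn by auto
  have z: "(\<Prod>a<k. L a (f a)) * minor_det M k f c = 0" if f: "f \<in> ?F - {?f0}" for f
  proof (cases "\<exists>a<k. a < f a")
    case True
    then obtain a where a: "a < k" "a < f a" by auto
    have "f a < n" using f a by auto
    then have "L a (f a) = 0" using L a kn unfolding lower_triangular_def by auto
    then have "(\<Prod>a<k. L a (f a)) = 0" by (intro prod_zero[of "{..<k}"]) (use a in auto)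
    then show ?thesis by simp
  next
    case False
    then have le: "\<forall>a<k. f a \<le> a" by auto
    have "\<not> inj_on f {..<k}"
    proof
      assume "inj_on f {..<k}"
      then have fa: "\<forall>a<k. f a = a" using inj_le_id[OF le] by blast
      have "f = ?f0"
      proof
        fix x show "f x = ?f0 x"
        proof (cases "x < k")
          case True then show ?thesis using fa by simp
        next
          case False
          then have "x \<notin> {..<k}" by simp
          then show ?thesis using f PiE_arb[of f "{..<k}" "\<lambda>_. {..<n}" x] by simp
        qed
      qed
      with f show False by simp
    qed
    then obtain a b where "a < k" "b < k" "a \<noteq> b" "f a = f b" unfolding inj_on_def by auto
    then have "minor_det M k f c = 0" by (rule minor_ident_rows)
    then show ?thesis by simp
  qed
  have "minor_det (mat_mult n L M) k (\<lambda>i. i) c = (\<Sum>f\<in>?F. (\<Prod>a<k. L a (f a)) * minor_det M k f c)"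
    by (rule minor_mult_rows)
  also have "\<dots> = (\<Prod>a<k. L a (?f0 a)) * minor_det M k ?f0 c"
  proof -
    have e1: "(\<Sum>f\<in>?F. (\<Prod>a<k. L a (f a)) * minor_det M k f c) = (\<Prod>a<k. L a (?f0 a)) * minor_det M k ?f0 c
       + (\<Sum>f\<in>?F - {?f0}. (\<Prod>a<k. L a (f a)) * minor_det M k f c)"
      by (rule sum.remove[OF _ f0]) (simp add: finite_PiE)
    have e2: "(\<Sum>f\<in>?F - {?f0}. (\<Prod>a<k. L a (f a)) * minor_det M k f c) = 0"
      by (rule sum.neutral) (use z in blast)
    show ?thesis using e1 e2 by simp
  qed
  also have "\<dots> = (\<Prod>a<k. L a a) * minor_det M k (\<lambda>i. i) c"
    by (intro arg_cong2[where f="(*)"] prod.cong minor_cong) auto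
  finally show ?thesis .
qed

lemma sorted_nth_in:
  assumes "finite I" "j < card I"
  shows "sorted_list_of_set I ! j \<in> I"
  using assms by (metis nth_mem length_sorted_list_of_set set_sorted_list_of_set)

lemma plucker_cong:
  assumes "\<And>i j. i < n \<Longrightarrow> j < n \<Longrightarrow> M i j = M' i j" and I: "I \<subseteq> {0..<n}"
  shows "plucker M I = plucker M' I"
proof -
  have fin: "finite I" using I finite_subset by blast
  have cn: "card I \<le> n" using card_mono[OF _ I] by simp
  have s: "sorted_list_of_set I ! j < n" if "j < card I" for j
    using sorted_nth_in[OF fin that] I by auto
  show ?thesis unfolding plucker_def
    using s cn by (intro minor_cong assms) auto
qed

lemma lt_plucker:
  assumes L: "lower_triangular n L" and I: "I \<subseteq> {0..<n}"
  shows "plucker (mat_mult n L M) I = (\<Prod>a<card I. L a a) * plucker M I"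
proof -
  have cn: "card I \<le> n" using card_mono[OF _ I] by simp
  show ?thesis unfolding plucker_def by (rule lt_minor[OF L cn])
qed

lemma lt_diag_nz:
  assumes L: "lower_triangular n L" and inv: "mat_invertible n L" and a: "a < n"
  shows "L a a \<noteq> 0"
proof
  assume z: "L a a = 0"
  obtain B where B: "\<forall>i<n. \<forall>j<n. mat_mult n L B i j = mat_id i j"
    using inv unfolding mat_invertible_def by blast
  have "minor_det (mat_mult n L B) (Suc a) (\<lambda>i. i) (\<lambda>i. i) = minor_det mat_id (Suc a) (\<lambda>i. i) (\<lambda>i. i)"
    using B a by (intro minor_cong) auto
  also have "\<dots> = 1" by (rule minor_id)
  finally have "(\<Prod>b<Suc a. L b b) * minor_det B (Suc a) (\<lambda>i. i) (\<lambda>i. i) = 1"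
    using lt_minor[OF L, of "Suc a" B] a by simp
  moreover have "(\<Prod>b<Suc a. L b b) = 0" using z by (intro prod_zero) auto
  ultimately show False by (metis mult_zero_left zero_neq_one)
qed

fun linv :: "(nat \<Rightarrow> nat \<Rightarrow> real) \<Rightarrow> nat \<Rightarrow> nat \<Rightarrow> real" where
  "linv A i j = (if i < j then 0 else if i = j then 1 / A i i
     else - (\<Sum>l\<in>{j..<i}. A i l * linv A l j) / A i i)"

declare linv.simps[simp del]

lemma linv_lt: "i < j \<Longrightarrow> linv A i j = 0"
  by (subst linv.simps) simp

lemma linv_diag: "linv A i i = 1 / A i i"
  by (subst linv.simps) simp

lemma linv_gt: "j < i \<Longrightarrow> linv A i j = - (\<Sum>l\<in>{j..<i}. A i l * linv A l j) / A i i"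
  by (subst linv.simps) simp

lemma linv_lower: "lower_triangular n (linv A)"
  unfolding lower_triangular_def by (simp add: linv_lt)

lemma linv_right:
  assumes L: "lower_triangular n A" and d: "\<forall>a<n. A a a \<noteq> 0" and i: "i < n" and j: "j < n"
  shows "mat_mult n A (linv A) i j = mat_id i j"
proof -
  have z: "\<forall>l\<in>{..<n} - {j..i}. A i l * linv A l j = 0"
  proof
    fix l assume "l \<in> {..<n} - {j..i}"
    then have l: "l < n" "l < j \<or> i < l" by auto
    show "A i l * linv A l j = 0"
    proof (cases "l < j")
      case True then show ?thesis by (simp add: linv_lt)
    next
      case False
      then have "i < l" using l by simp
      then have "A i l = 0" using L i l unfolding lower_triangular_def by blast
      then show ?thesis by simp
    qed
  qed
  have "mat_mult n A (linv A) i j = (\<Sum>l\<in>{j..i}. A i l * linv A l j)"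
    unfolding mat_mult_def
    by (rule sum.mono_neutral_right[OF _ _ z]) (use i in auto)
  also have "\<dots> = mat_id i j"
  proof (cases "i < j")
    case True then show ?thesis by (simp add: mat_id_def)
  next
    case False
    show ?thesis
    proof (cases "i = j")
      case True then show ?thesis using d i by (simp add: mat_id_def linv_diag)
    next
      case ne: False
      with False have ji: "j < i" by simp
      have "{j..i} = insert i {j..<i}" using ji by auto
      then have "(\<Sum>l\<in>{j..i}. A i l * linv A l j) = A i i * linv A i j + (\<Sum>l\<in>{j..<i}. A i l * linv A l j)"
        by simp
      also have "\<dots> = 0" using d i ji by (simp add: linv_gt)
      finally show ?thesis using ne by (simp add: mat_id_def)
    qed
  qed
  finally show ?thesis .
qed

lemma lt_inverse:
  assumes L: "lower_triangular n A" and d: "\<forall>a<n. A a a \<noteq> 0"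
  shows "\<forall>i<n. \<forall>j<n. mat_mult n A (linv A) i j = mat_id i j \<and> mat_mult n (linv A) A i j = mat_id i j"
proof -
  let ?B = "linv A" let ?C = "linv (linv A)"
  have AB: "\<And>i j. i < n \<Longrightarrow> j < n \<Longrightarrow> mat_mult n A ?B i j = mat_id i j"
    using linv_right[OF L d] by blast
  have dB: "\<forall>a<n. ?B a a \<noteq> 0" using d by (simp add: linv_diag)
  have BC: "\<And>i j. i < n \<Longrightarrow> j < n \<Longrightarrow> mat_mult n ?B ?C i j = mat_id i j"
    using linv_right[OF linv_lower dB] by blast
  have AC: "A i j = ?C i j" if ij: "i < n" "j < n" for i j
  proof -
    have "A i j = mat_mult n A mat_id i j" using ij by (simp add: mm_id_right)
    also have "\<dots> = mat_mult n A (mat_mult n ?B ?C) i j" using ij by (intro mm_cong) (simp_all add: BC)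
    also have "\<dots> = mat_mult n (mat_mult n A ?B) ?C i j" by (simp add: mm_assoc)
    also have "\<dots> = mat_mult n mat_id ?C i j" using ij by (intro mm_cong) (simp_all add: AB)
    also have "\<dots> = ?C i j" using ij by (simp add: mm_id_left)
    finally show ?thesis .
  qed
  have "mat_mult n ?B A i j = mat_id i j" if ij: "i < n" "j < n" for i j
  proof -
    have "mat_mult n ?B A i j = mat_mult n ?B ?C i j" by (intro mm_cong refl AC) (use ij in auto)
    then show ?thesis using BC ij by simp
  qed
  then show ?thesis using AB by blast
qed

lemma lt_invertible:
  assumes L: "lower_triangular n A" and d: "\<forall>a<n. A a a \<noteq> 0"
  shows "mat_invertible n A" "mat_invertible n (linv A)"
  using lt_inverse[OF L d] unfolding mat_invertible_def by blast+

lemma mm_invertible: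
  assumes A: "mat_invertible n A" and B: "mat_invertible n B"
  shows "mat_invertible n (mat_mult n A B)"
proof -
  obtain A' where A': "\<forall>i<n. \<forall>j<n. mat_mult n A A' i j = mat_id i j \<and> mat_mult n A' A i j = mat_id i j"
    using A unfolding mat_invertible_def by blast
  obtain B' where B': "\<forall>i<n. \<forall>j<n. mat_mult n B B' i j = mat_id i j \<and> mat_mult n B' B i j = mat_id i j"
    using B unfolding mat_invertible_def by blast
  have 1: "mat_mult n (mat_mult n A B) (mat_mult n B' A') i j = mat_id i j" if ij: "i < n" "j < n" for i j
  proof -
    have "mat_mult n (mat_mult n A B) (mat_mult n B' A') i j = mat_mult n A (mat_mult n (mat_mult n B B') A') i j"
      by (simp add: mm_assoc)
    also have "\<dots> = mat_mult n A A' i j"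
      using B' by (intro mm_cong refl mm_left_idc) auto
    finally show ?thesis using A' ij by simp
  qed
  have 2: "mat_mult n (mat_mult n B' A') (mat_mult n A B) i j = mat_id i j" if ij: "i < n" "j < n" for i j
  proof -
    have "mat_mult n (mat_mult n B' A') (mat_mult n A B) i j = mat_mult n B' (mat_mult n (mat_mult n A' A) B) i j"
      by (simp add: mm_assoc)
    also have "\<dots> = mat_mult n B' B i j"
      using A' by (intro mm_cong refl mm_left_idc) auto
    finally show ?thesis using B' ij by simp
  qed
  show ?thesis unfolding mat_invertible_def using 1 2 by blast
qed

lemma dominance:
  fixes e :: "'a \<Rightarrow> nat" and d :: "'a \<Rightarrow> real"
  assumes fin: "finite F" and ex: "\<exists>f\<in>F. d f \<noteq> 0"
    and pos: "\<And>f. f \<in> F \<Longrightarrow> d f \<noteq> 0 \<Longrightarrow> (\<forall>g\<in>F. d g \<noteq> 0 \<longrightarrow> e f \<le> e g) \<Longrightarrow> d f > 0"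
  shows "eventually (\<lambda>x. (\<Sum>f\<in>F. x ^ e f * d f) > 0) (at_right (0::real))"
proof -
  let ?S = "{f\<in>F. d f \<noteq> 0}"
  have finS: "finite (e ` ?S)" using fin by simp
  have neS: "e ` ?S \<noteq> {}" using ex by auto
  define m where "m = Min (e ` ?S)"
  obtain f0 where f0: "f0 \<in> ?S" "e f0 = m" using Min_in[OF finS neS] unfolding m_def by auto
  have mle: "\<And>g. g \<in> F \<Longrightarrow> d g \<noteq> 0 \<Longrightarrow> m \<le> e g"
    unfolding m_def using finS by (intro Min_le) auto
  define L where "L = (\<Sum>f\<in>F. if d f \<noteq> 0 \<and> e f = m then d f else 0)"
  define h where "h x = (\<Sum>f\<in>F. x ^ (e f - m) * d f)" for x :: real
  have lim: "(h \<longlongrightarrow> L) (at_right 0)"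
    unfolding h_def L_def
  proof (rule tendsto_sum)
    fix f assume f: "f \<in> F"
    show "((\<lambda>x. x ^ (e f - m) * d f) \<longlongrightarrow> (if d f \<noteq> 0 \<and> e f = m then d f else 0)) (at_right 0)"
    proof (cases "d f = 0")
      case True then show ?thesis by simp
    next
      case False
      show ?thesis
      proof (cases "e f = m")
        case True then show ?thesis using False by simp
      next
        case ne: False
        then have "e f - m > 0" using mle[OF f False] by simp
        then have "((\<lambda>x::real. x ^ (e f - m)) \<longlongrightarrow> 0 ^ (e f - m)) (at_right 0)"
          by (intro tendsto_intros)
        then have "((\<lambda>x::real. x ^ (e f - m)) \<longlongrightarrow> 0) (at_right 0)"
          using \<open>e f - m > 0\<close> by simp
        then have "((\<lambda>x::real. x ^ (e f - m) * d f) \<longlongrightarrow> 0 * d f) (at_right 0)"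
          by (intro tendsto_intros)
        then show ?thesis using ne by simp
      qed
    qed
  qed
  have Lpos: "L > 0"
  proof -
    have nn: "\<forall>f\<in>F. 0 \<le> (if d f \<noteq> 0 \<and> e f = m then d f else 0)"
    proof
      fix f assume f: "f \<in> F"
      show "0 \<le> (if d f \<noteq> 0 \<and> e f = m then d f else 0)"
      proof (cases "d f \<noteq> 0 \<and> e f = m")
        case True
        then have "d f > 0" using pos[OF f] mle by auto
        then show ?thesis using True by simp
      qed auto
    qed
    have "d f0 > 0" using pos[of f0] f0 mle by auto
    then have "0 < (if d f0 \<noteq> 0 \<and> e f0 = m then d f0 else 0)" using f0 by simp
    also have "\<dots> \<le> L" unfolding L_def
      using f0(1) nn fin by (intro member_le_sum) auto
    finally show ?thesis .
  qed
  have ev1: "eventually (\<lambda>x. h x > 0) (at_right 0)"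
    using order_tendstoD(1)[OF lim Lpos] .
  have ev2: "eventually (\<lambda>x::real. x > 0) (at_right 0)"
    by (rule eventually_at_right_less)
  show ?thesis
    using ev1 ev2
  proof eventually_elim
    case (elim x)
    have "(\<Sum>f\<in>F. x ^ e f * d f) = (\<Sum>f\<in>F. x ^ m * (x ^ (e f - m) * d f))"
    proof (rule sum.cong)
      fix f assume f: "f \<in> F"
      show "x ^ e f * d f = x ^ m * (x ^ (e f - m) * d f)"
      proof (cases "d f = 0")
        case False
        then have "m \<le> e f" using mle[OF f] by simp
        then have "x ^ e f = x ^ m * x ^ (e f - m)" by (simp add: power_add[symmetric])
        then show ?thesis by simp
      qed simp
    qed simp
    also have "\<dots> = x ^ m * h x" unfolding h_def by (simp add: sum_distrib_left)
    also have "\<dots> > 0" using elim by simp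
    finally show ?case .
  qed
qed

lemma sum_two:
  assumes "finite S" "a \<in> S" "b \<in> S" "a \<noteq> b"
  shows "sum h S = h a + h b + sum h (S - {a, b})"
proof -
  have "sum h S = h a + sum h (S - {a})" using assms by (simp add: sum.remove)
  also have "sum h (S - {a}) = h b + sum h (S - {a} - {b})" using assms by (intro sum.remove) auto
  also have "S - {a} - {b} = S - {a, b}" by auto
  finally show ?thesis by (simp add: ac_simps)
qed

lemma incr_ge:
  fixes f :: "nat \<Rightarrow> nat"
  assumes "\<forall>a b. a < b \<longrightarrow> b < k \<longrightarrow> f a < f b"
  shows "a < k \<Longrightarrow> a \<le> f a"
proof (induction a)
  case 0 then show ?case by simp
next
  case (Suc a)
  then have "a \<le> f a" by simp
  moreover have "f a < f (Suc a)" using assms Suc.prems by auto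
  ultimately show ?case by simp
qed

lemma sorted_facts:
  assumes S: "S \<subseteq> {0..<n}"
  shows "\<forall>a b. a < b \<longrightarrow> b < card S \<longrightarrow> sorted_list_of_set S ! a < sorted_list_of_set S ! b"
    and "\<forall>a. a < card S \<longrightarrow> sorted_list_of_set S ! a < n"
    and "card S \<le> n"
proof -
  have fin: "finite S" using S finite_subset by blast
  show "\<forall>a b. a < b \<longrightarrow> b < card S \<longrightarrow> sorted_list_of_set S ! a < sorted_list_of_set S ! b"
  proof (intro allI impI)
    fix a b assume ab: "a < b" "b < card S"
    then show "sorted_list_of_set S ! a < sorted_list_of_set S ! b"
      using sorted_wrt_nth_less[OF strict_sorted_list_of_set, of a b S] fin by (simp add: length_sorted_list_of_set)
  qed
  show "\<forall>a. a < card S \<longrightarrow> sorted_list_of_set S ! a < n"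
    using sorted_nth_in[OF fin] S by (meson atLeastLessThan_iff subsetD)
  show "card S \<le> n" using card_mono[OF _ S] by simp
qed

lemma plucker_incr:
  fixes g :: "nat \<Rightarrow> nat"
  assumes inc: "\<forall>a b. a < b \<longrightarrow> b < k \<longrightarrow> g a < g b"
  shows "minor_det M k (\<lambda>i. i) g = plucker M (g ` {..<k})"
proof -
  let ?T = "g ` {..<k}"
  have inj: "inj_on g {..<k}"
    unfolding inj_on_def using inc by (metis lessThan_iff linorder_neqE_nat less_irrefl)
  have card: "card ?T = k" using card_image[OF inj] by simp
  have "sorted_wrt (<) (map g [0..<k])"
    unfolding sorted_wrt_iff_nth_less using inc by auto
  moreover have "set (map g [0..<k]) = ?T" by auto
  ultimately have s: "sorted_list_of_set ?T = map g [0..<k]"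
    using card by (subst sorted_list_of_set_unique[symmetric]) auto
  show ?thesis unfolding plucker_def card s
    by (intro minor_cong) auto
qed

definition sqd :: "nat \<Rightarrow> nat \<Rightarrow> nat" where "sqd a b = nat ((int a - int b)^2)"
definition Gm :: "real \<Rightarrow> nat \<Rightarrow> nat \<Rightarrow> real" where "Gm x i j = x ^ sqd i j"

lemma sqd_int: "int (sqd a b) = (int a - int b)^2"
  unfolding sqd_def by simp

lemma sqd_swap:
  assumes "g2 < g1" "c1 < c2"
  shows "sqd g2 c1 + sqd g1 c2 < sqd g1 c1 + sqd g2 c2"
proof -
  have p: "0 < (int g1 - int g2) * (int c2 - int c1)" using assms by simp
  have e: "(int g2 - int c1)^2 + (int g1 - int c2)^2 = (int g1 - int c1)^2 + (int g2 - int c2)^2 - 2 * ((int g1 - int g2) * (int c2 - int c1))"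
    by (simp add: power2_eq_square algebra_simps)
  have "int (sqd g2 c1 + sqd g1 c2) < int (sqd g1 c1 + sqd g2 c2)"
    using p e by (simp add: sqd_int)
  then show ?thesis by linarith
qed

lemma wswap:
  fixes p q x y :: nat
  assumes "q < p" "y < x"
  shows "p * y + q * x < p * x + q * y"
proof -
  obtain s where s: "0 < s" "p = q + s" using less_imp_add_positive[OF assms(1)] by auto
  obtain t where t: "0 < t" "x = y + t" using less_imp_add_positive[OF assms(2)] by auto
  show ?thesis using s t by (simp add: algebra_simps)
qed

lemma tr_lt: "b < k \<Longrightarrow> b1 < k \<Longrightarrow> b2 < k \<Longrightarrow> Transposition.transpose b1 b2 b < k"
  by (simp add: Transposition.transpose_def)

lemma G_step:
  assumes inv: "mat_invertible n M" and nn: "\<forall>I. I \<subseteq> {0..<n} \<longrightarrow> plucker M I \<ge> 0"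
    and C: "C \<subseteq> {0..<n}"
  shows "eventually (\<lambda>x. plucker (mat_mult n M (Gm x)) C > 0) (at_right 0)"
proof -
  define k where "k = card C"
  define c where "c = (\<lambda>j. sorted_list_of_set C ! j)"
  have cinc: "\<forall>a b. a < b \<longrightarrow> b < k \<longrightarrow> c a < c b" using sorted_facts(1)[OF C] unfolding k_def c_def by simp
  have kn: "k \<le> n" using sorted_facts(3)[OF C] k_def by simp
  let ?F = "PiE {..<k} (\<lambda>_. {..<n})"
  define e where "e g = (\<Sum>b<k. sqd (g b) (c b))" for g :: "nat \<Rightarrow> nat"
  define d where "d g = minor_det M k (\<lambda>i. i) g" for g
  have eq: "plucker (mat_mult n M (Gm x)) C = (\<Sum>g\<in>?F. x ^ e g * d g)" for x
  proof -
    have "plucker (mat_mult n M (Gm x)) C = minor_det (mat_mult n M (Gm x)) k (\<lambda>i. i) c"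
      unfolding plucker_def k_def c_def ..
    also have "\<dots> = (\<Sum>g\<in>?F. d g * (\<Prod>b<k. Gm x (g b) (c b)))" unfolding d_def by (rule minor_mult_cols)
    also have "\<dots> = (\<Sum>g\<in>?F. x ^ e g * d g)" unfolding e_def Gm_def by (simp add: power_sum mult.commute)
    finally show ?thesis .
  qed
  have ex: "\<exists>g\<in>?F. d g \<noteq> 0"
  proof (rule ccontr)
    assume "\<not> ?thesis"
    then have z: "\<forall>g\<in>?F. d g = 0" by simp
    obtain B where B: "\<forall>i<n. \<forall>j<n. mat_mult n M B i j = mat_id i j" using inv unfolding mat_invertible_def by blast
    have "1 = minor_det mat_id k (\<lambda>i. i) (\<lambda>i. i)" by (simp add: minor_id)
    also have "\<dots> = minor_det (mat_mult n M B) k (\<lambda>i. i) (\<lambda>i. i)" using B kn by (intro minor_cong) auto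
    also have "\<dots> = (\<Sum>g\<in>?F. d g * (\<Prod>b<k. B (g b) b))" unfolding d_def by (rule minor_mult_cols)
    also have "\<dots> = 0" using z by simp
    finally show False by simp
  qed
  have pos: "d g > 0" if g: "g \<in> ?F" "d g \<noteq> 0" and gmin: "\<forall>h\<in>?F. d h \<noteq> 0 \<longrightarrow> e g \<le> e h" for g
  proof -
    have ginc: "\<forall>a b. a < b \<longrightarrow> b < k \<longrightarrow> g a < g b"
    proof (rule ccontr)
      assume "\<not> ?thesis"
      then obtain b1 b2 where b: "b1 < b2" "b2 < k" "g b2 \<le> g b1" by (auto simp: not_less)
      show False
      proof (cases "g b1 = g b2")
        case True
        then have "d g = 0" unfolding d_def using b by (intro minor_ident_cols[of b1 k b2]) auto
        then show False using g by simp
      next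
        case False
        then have gl: "g b2 < g b1" using b by simp
        let ?t = "Transposition.transpose b1 b2"
        define g' where "g' = restrict (g \<circ> ?t) {..<k}"
        have g'F: "g' \<in> ?F" using g(1) b tr_lt[of _ k b1 b2] unfolding g'_def by auto
        have "d g' = minor_det M k (\<lambda>i. i) (g \<circ> ?t)" unfolding d_def g'_def
          using tr_lt[of _ k b1 b2] b by (intro minor_cong) auto
        also have "\<dots> = - d g" unfolding d_def using b by (intro minor_swap_cols) auto
        finally have dg': "d g' \<noteq> 0" using g by simp
        have fin: "finite {..<k}" by simp
        have m1: "b1 \<in> {..<k}" "b2 \<in> {..<k}" "b1 \<noteq> b2" using b by auto
        define Rest where "Rest = (\<Sum>b\<in>{..<k} - {b1,b2}. sqd (g b) (c b))"
        have E1: "e g' = sqd (g b2) (c b1) + sqd (g b1) (c b2) + Rest"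
        proof -
          have s1: "e g' = sqd (g' b1) (c b1) + sqd (g' b2) (c b2) + (\<Sum>b\<in>{..<k} - {b1,b2}. sqd (g' b) (c b))"
            unfolding e_def by (rule sum_two[OF fin m1])
          have s2: "(\<Sum>b\<in>{..<k} - {b1,b2}. sqd (g' b) (c b)) = Rest"
            unfolding Rest_def by (intro sum.cong) (auto simp: g'_def)
          have s3: "g' b1 = g b2" "g' b2 = g b1" using m1 by (auto simp: g'_def)
          show ?thesis unfolding s1 s2 s3 ..
        qed
        have E2: "e g = sqd (g b1) (c b1) + sqd (g b2) (c b2) + Rest"
          unfolding e_def Rest_def by (rule sum_two[OF fin m1])
        have "c b1 < c b2" using cinc b by simp
        then have "e g' < e g" using E1 E2 sqd_swap[OF gl] by simp
        then show False using gmin g'F dg' by force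
      qed
    qed
    have "d g = plucker M (g ` {..<k})" unfolding d_def by (rule plucker_incr[OF ginc])
    moreover have "g ` {..<k} \<subseteq> {0..<n}" using g(1) by auto
    ultimately have "d g \<ge> 0" using nn by simp
    then show ?thesis using g by simp
  qed
  have "eventually (\<lambda>x. (\<Sum>g\<in>?F. x ^ e g * d g) > 0) (at_right 0)"
    by (rule dominance[OF _ ex pos]) (auto simp: finite_PiE)
  then show ?thesis by (simp add: eq)
qed

definition Am :: "nat \<Rightarrow> real \<Rightarrow> nat \<Rightarrow> nat \<Rightarrow> real" where
  "Am n x i j = (if j \<le> i then x ^ ((n - i) * j) else 0)"

lemma A_step:
  assumes Y: "\<forall>C. C \<subseteq> {0..<n} \<longrightarrow> plucker Y C > 0" and R: "R \<subseteq> {0..<n}" and C: "C \<subseteq> {0..<n}"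
    and card: "card R = card C"
  shows "eventually (\<lambda>x. minor_det (mat_mult n (Am n x) Y) (card R) (\<lambda>i. sorted_list_of_set R ! i)
            (\<lambda>j. sorted_list_of_set C ! j) > 0) (at_right 0)"
proof -
  define k where "k = card R"
  define r where "r = (\<lambda>i. sorted_list_of_set R ! i)"
  define c where "c = (\<lambda>j. sorted_list_of_set C ! j)"
  have rinc: "\<forall>a b. a < b \<longrightarrow> b < k \<longrightarrow> r a < r b" using sorted_facts(1)[OF R] unfolding k_def r_def by simp
  have rn: "\<forall>a. a < k \<longrightarrow> r a < n" using sorted_facts(2)[OF R] unfolding k_def r_def by simp
  have kn: "k \<le> n" using sorted_facts(3)[OF R] k_def by simp
  have rge: "\<And>a. a < k \<Longrightarrow> a \<le> r a" using incr_ge[OF rinc] by blast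
  let ?F = "PiE {..<k} (\<lambda>_. {..<n})"
  define V where "V f \<longleftrightarrow> (\<forall>a<k. f a \<le> r a)" for f :: "nat \<Rightarrow> nat"
  define e where "e f = (\<Sum>a<k. (n - r a) * f a)" for f :: "nat \<Rightarrow> nat"
  define d where "d f = (if V f then minor_det Y k f c else 0)" for f
  have eq: "minor_det (mat_mult n (Am n x) Y) k r c = (\<Sum>f\<in>?F. x ^ e f * d f)" for x
  proof -
    have "minor_det (mat_mult n (Am n x) Y) k r c = (\<Sum>f\<in>?F. (\<Prod>a<k. Am n x (r a) (f a)) * minor_det Y k f c)"
      by (rule minor_mult_rows)
    also have "\<dots> = (\<Sum>f\<in>?F. x ^ e f * d f)"
    proof (rule sum.cong[OF refl])
      fix f assume f: "f \<in> ?F"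
      show "(\<Prod>a<k. Am n x (r a) (f a)) * minor_det Y k f c = x ^ e f * d f"
      proof (cases "V f")
        case True
        then have "(\<Prod>a<k. Am n x (r a) (f a)) = (\<Prod>a<k. x ^ ((n - r a) * f a))"
          unfolding V_def Am_def by (intro prod.cong) auto
        also have "\<dots> = x ^ e f" unfolding e_def by (simp add: power_sum)
        finally show ?thesis using True unfolding d_def by simp
      next
        case False
        then obtain a where a: "a < k" "\<not> f a \<le> r a" unfolding V_def by auto
        then have "Am n x (r a) (f a) = 0" unfolding Am_def by simp
        then have "(\<Prod>a<k. Am n x (r a) (f a)) = 0" by (intro prod_zero[of "{..<k}"]) (use a in auto)
        then show ?thesis using False unfolding d_def by simp
      qed
    qed
    finally show ?thesis .
  qed
  define f0 where "f0 = restrict (\<lambda>a. a) {..<k}"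
  have f0F: "f0 \<in> ?F" using kn unfolding f0_def by auto
  have f0V: "V f0" unfolding V_def f0_def using rge by auto
  have df0: "d f0 = plucker Y C"
  proof -
    have "d f0 = minor_det Y k f0 c" unfolding d_def using f0V by simp
    also have "\<dots> = minor_det Y k (\<lambda>i. i) c" by (intro minor_cong) (auto simp: f0_def)
    also have "\<dots> = plucker Y C" unfolding plucker_def k_def c_def card ..
    finally show ?thesis .
  qed
  have df0pos: "d f0 > 0" using df0 Y C by simp
  have pos: "d f > 0" if f: "f \<in> ?F" "d f \<noteq> 0" and fmin: "\<forall>h\<in>?F. d h \<noteq> 0 \<longrightarrow> e f \<le> e h" for f
  proof -
    have fV: "V f" and fm: "minor_det Y k f c \<noteq> 0" using f(2) unfolding d_def by (auto split: if_splits)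
    have finc: "\<forall>a b. a < b \<longrightarrow> b < k \<longrightarrow> f a < f b"
    proof (rule ccontr)
      assume "\<not> ?thesis"
      then obtain a1 a2 where a: "a1 < a2" "a2 < k" "f a2 \<le> f a1" by (auto simp: not_less)
      show False
      proof (cases "f a1 = f a2")
        case True
        then have "minor_det Y k f c = 0" using a by (intro minor_ident_rows[of a1 k a2]) auto
        then show False using fm by simp
      next
        case False
        then have fl: "f a2 < f a1" using a by simp
        let ?t = "Transposition.transpose a1 a2"
        define f' where "f' = restrict (f \<circ> ?t) {..<k}"
        have f'F: "f' \<in> ?F" using f(1) a tr_lt[of _ k a1 a2] unfolding f'_def by auto
        have ra: "r a1 < r a2" using rinc a by simp
        have f'V: "V f'" unfolding V_def
        proof (intro allI impI)
          fix b assume b: "b < k"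
          show "f' b \<le> r b"
          proof (cases "b = a1")
            case True
            have "f a1 \<le> r a1" using fV a unfolding V_def by auto
            then show ?thesis using True fl a unfolding f'_def by auto
          next
            case ne1: False
            show ?thesis
            proof (cases "b = a2")
              case True
              have "f a1 \<le> r a1" using fV a unfolding V_def by auto
              then show ?thesis using True ra a unfolding f'_def by auto
            next
              case False then show ?thesis using ne1 b fV unfolding V_def f'_def by auto
            qed
          qed
        qed
        have "minor_det Y k f' c = minor_det Y k (f \<circ> ?t) c"
          using tr_lt[of _ k a1 a2] a by (intro minor_cong) (auto simp: f'_def)
        also have "\<dots> = - minor_det Y k f c" using a by (intro minor_swap_rows) auto
        finally have df': "d f' \<noteq> 0" using fm f'V unfolding d_def by simp
        have fin: "finite {..<k}" by simp
        have m1: "a1 \<in> {..<k}" "a2 \<in> {..<k}" "a1 \<noteq> a2" using a by auto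
        define Rest where "Rest = (\<Sum>b\<in>{..<k} - {a1,a2}. (n - r b) * f b)"
        have E1: "e f' = (n - r a1) * f a2 + (n - r a2) * f a1 + Rest"
        proof -
          have s1: "e f' = (n - r a1) * f' a1 + (n - r a2) * f' a2 + (\<Sum>b\<in>{..<k} - {a1,a2}. (n - r b) * f' b)"
            unfolding e_def by (rule sum_two[OF fin m1])
          have s2: "(\<Sum>b\<in>{..<k} - {a1,a2}. (n - r b) * f' b) = Rest"
            unfolding Rest_def by (intro sum.cong) (auto simp: f'_def)
          have s3: "f' a1 = f a2" "f' a2 = f a1" using m1 by (auto simp: f'_def)
          show ?thesis unfolding s1 s2 s3 ..
        qed
        have E2: "e f = (n - r a1) * f a1 + (n - r a2) * f a2 + Rest"
          unfolding e_def Rest_def by (rule sum_two[OF fin m1])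
        have "n - r a2 < n - r a1" using ra rn a by auto
        then have "e f' < e f" using E1 E2 wswap[OF _ fl] by simp
        then show False using fmin f'F df' by force
      qed
    qed
    have fid: "\<forall>a<k. f a = a"
    proof (rule ccontr)
      assume "\<not> ?thesis"
      then obtain a where a: "a < k" "f a \<noteq> a" by auto
      have ge: "\<forall>b\<in>{..<k}. (n - r b) * f0 b \<le> (n - r b) * f b"
        using incr_ge[OF finc] by (auto simp: f0_def)
      have "a < f a" using incr_ge[OF finc a(1)] a(2) by simp
      moreover have "0 < n - r a" using rn a by auto
      ultimately have "(n - r a) * f0 a < (n - r a) * f a" using a by (simp add: f0_def)
      then have gt: "\<exists>b\<in>{..<k}. (n - r b) * f0 b < (n - r b) * f b" using a by auto
      have "e f0 < e f" unfolding e_def by (rule sum_strict_mono_ex1[OF _ ge gt]) simp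
      moreover have "e f \<le> e f0" using fmin f0F df0pos by auto
      ultimately show False by simp
    qed
    have "d f = minor_det Y k f c" unfolding d_def using fV by simp
    also have "\<dots> = minor_det Y k f0 c" using fid by (intro minor_cong) (auto simp: f0_def)
    also have "\<dots> = d f0" unfolding d_def using f0V by simp
    finally show ?thesis using df0pos by simp
  qed
  have "eventually (\<lambda>x. (\<Sum>f\<in>?F. x ^ e f * d f) > 0) (at_right 0)"
  proof (rule dominance[OF _ _ pos])
    show "\<exists>f\<in>?F. d f \<noteq> 0" using f0F df0pos by (intro bexI[of _ f0]) auto
  qed (auto simp: finite_PiE)
  then have "eventually (\<lambda>x. minor_det (mat_mult n (Am n x) Y) k r c > 0) (at_right 0)"
    by (simp add: eq)
  then show ?thesis unfolding k_def r_def c_def .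
qed

lemma minor_zero: "minor_det M 0 r c = 1"
  using minor_cong[of 0 M r c mat_id "\<lambda>i. i" "\<lambda>i. i"] minor_id[of 0] by simp

lemma plucker_empty: "plucker M {} = 1"
  unfolding plucker_def by (simp add: minor_zero)

lemma inv_cong:
  assumes "\<And>i j. i < n \<Longrightarrow> j < n \<Longrightarrow> A i j = A' i j" and "mat_invertible n A"
  shows "mat_invertible n A'"
proof -
  obtain B where B: "\<forall>i<n. \<forall>j<n. mat_mult n A B i j = mat_id i j \<and> mat_mult n B A i j = mat_id i j"
    using assms(2) unfolding mat_invertible_def by blast
  have "mat_mult n A' B i j = mat_mult n A B i j" if "i < n" for i j using assms(1) that by (intro mm_cong) auto
  moreover have "mat_mult n B A' i j = mat_mult n B A i j" if "j < n" for i j using assms(1) that by (intro mm_cong) auto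
  ultimately show ?thesis unfolding mat_invertible_def using B by metis
qed

lemma plucker_tendsto:
  assumes lim: "\<And>i j. i < n \<Longrightarrow> j < n \<Longrightarrow> (\<lambda>k. X k i j) \<longlonglongrightarrow> M i j" and I: "I \<subseteq> {0..<n}"
  shows "(\<lambda>k. plucker (X k) I) \<longlonglongrightarrow> plucker M I"
proof -
  have s: "\<And>j. j < card I \<Longrightarrow> sorted_list_of_set I ! j < n" using sorted_facts(2)[OF I] by blast
  have cn: "card I \<le> n" using sorted_facts(3)[OF I] .
  show ?thesis unfolding plucker_def minor_det_def
  proof (intro tendsto_sum tendsto_mult tendsto_const tendsto_prod)
    fix p i assume p: "p \<in> {p. p permutes {0..<card I}}" and i: "i \<in> {..<card I}"
    have "p i < card I" using p i permutes_in_image[of p "{0..<card I}" i] by auto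
    then show "(\<lambda>k. X k i (sorted_list_of_set I ! p i)) \<longlonglongrightarrow> M i (sorted_list_of_set I ! p i)"
      using i cn s by (intro lim) auto
  qed
qed

lemma real_sub_syn: "realizable_flag_positroids n \<subseteq> synthetic_flag_positroids n"
proof
  fix P assume "P \<in> realizable_flag_positroids n"
  then obtain M where P: "P = nonzero_plucker n M" and tnn: "in_tnn_flag n M"
    unfolding realizable_flag_positroids_def by auto
  from tnn obtain X where inv: "mat_invertible n M"
    and XN: "\<forall>k. \<exists>N. totally_positive n N \<and> same_flag n N (X k)"
    and lim: "\<forall>i<n. \<forall>j<n. (\<lambda>k. X k i j) \<longlonglongrightarrow> M i j"
    unfolding in_tnn_flag_def by blast
  from XN obtain N where N: "\<And>k. totally_positive n (N k) \<and> same_flag n (N k) (X k)" by metis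
  then have "\<forall>k. \<exists>L. mat_invertible n L \<and> lower_triangular n L \<and>
      (\<forall>i<n. \<forall>j<n. X k i j = mat_mult n L (N k) i j)" unfolding same_flag_def by blast
  then obtain L where L: "\<And>k. mat_invertible n (L k) \<and> lower_triangular n (L k) \<and>
      (\<forall>i<n. \<forall>j<n. X k i j = mat_mult n (L k) (N k) i j)" by metis
  have Xpl: "plucker (X k) I = (\<Prod>a<card I. L k a a) * plucker (N k) I" if I: "I \<subseteq> {0..<n}" for k I
  proof -
    have "plucker (X k) I = plucker (mat_mult n (L k) (N k)) I"
      using L[of k] I by (intro plucker_cong[of n]) auto
    also have "\<dots> = (\<Prod>a<card I. L k a a) * plucker (N k) I"
      using L[of k] I by (intro lt_plucker) auto
    finally show ?thesis .
  qed
  have Npos: "plucker (N k) I > 0" if I: "I \<subseteq> {0..<n}" for k I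
  proof (cases "I = {}")
    case True then show ?thesis by (simp add: plucker_empty)
  next
    case False
    let ?R = "{0..<card I}"
    have cn: "card I \<le> n" using sorted_facts(3)[OF I] .
    have TP: "\<forall>R C. R \<subseteq> {0..<n} \<and> C \<subseteq> {0..<n} \<and> card R = card C \<and> R \<noteq> {} \<longrightarrow>
        minor_det (N k) (card R) (\<lambda>i. sorted_list_of_set R ! i) (\<lambda>j. sorted_list_of_set C ! j) > 0"
      using N[of k] unfolding totally_positive_def by blast
    have h: "?R \<subseteq> {0..<n} \<and> I \<subseteq> {0..<n} \<and> card ?R = card I \<and> ?R \<noteq> {}"
      using I False cn finite_subset[OF I] by auto
    have "minor_det (N k) (card ?R) (\<lambda>i. sorted_list_of_set ?R ! i) (\<lambda>j. sorted_list_of_set I ! j) > 0"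
      using TP h by blast
    moreover have "minor_det (N k) (card ?R) (\<lambda>i. sorted_list_of_set ?R ! i) (\<lambda>j. sorted_list_of_set I ! j)
        = plucker (N k) I"
    proof -
      have ce: "card ?R = card I" by simp
      show ?thesis unfolding ce plucker_def by (intro minor_cong) auto
    qed
    ultimately show ?thesis by simp
  qed
  have Mlim: "(\<lambda>k. plucker (X k) I) \<longlonglongrightarrow> plucker M I" if "I \<subseteq> {0..<n}" for I
    using lim that by (intro plucker_tendsto[of n]) auto
  define t where "t j = (if \<exists>I. I \<subseteq> {0..<n} \<and> card I = j \<and> plucker M I < 0 then -1 else (1::real))" for j
  have tsgn: "t (card I) * plucker M I \<ge> 0" if I: "I \<subseteq> {0..<n}" for I
  proof (cases "\<exists>J. J \<subseteq> {0..<n} \<and> card J = card I \<and> plucker M J < 0")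
    case False
    then have "\<not> plucker M I < 0" using I by blast
    then show ?thesis using False unfolding t_def by simp
  next
    case True
    then obtain J where J: "J \<subseteq> {0..<n}" "card J = card I" "plucker M J < 0" by blast
    have "plucker M I \<le> 0"
    proof (rule ccontr)
      assume "\<not> plucker M I \<le> 0"
      then have pI: "plucker M I > 0" by simp
      have "eventually (\<lambda>k. plucker (X k) I > 0) sequentially"
        using order_tendstoD(1)[OF Mlim[OF I] pI] .
      moreover have "eventually (\<lambda>k. plucker (X k) J < 0) sequentially"
        using order_tendstoD(2)[OF Mlim[OF J(1)] J(3)] .
      ultimately have "eventually (\<lambda>k. plucker (X k) I > 0 \<and> plucker (X k) J < 0) sequentially"
        by (rule eventually_conj)
      then obtain k where k: "plucker (X k) I > 0" "plucker (X k) J < 0"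
        unfolding eventually_sequentially by auto
      let ?s = "\<Prod>a<card I. L k a a"
      have "?s * plucker (N k) I > 0" using k Xpl[OF I] by simp
      then have "?s > 0" using Npos[OF I, of k] by (simp add: zero_less_mult_iff)
      moreover have "?s * plucker (N k) J < 0" using k Xpl[OF J(1)] J(2) by simp
      ultimately show False using Npos[OF J(1), of k] by (simp add: mult_less_0_iff)
    qed
    then show ?thesis using True unfolding t_def by simp
  qed
  have t2: "t j * t j = 1" for j unfolding t_def by simp
  have t0: "t 0 = 1"
  proof -
    have "\<not> (I \<subseteq> {0..<n} \<and> card I = 0 \<and> plucker M I < 0)" for I
    proof
      assume a: "I \<subseteq> {0..<n} \<and> card I = 0 \<and> plucker M I < 0"
      then have "I = {}" using finite_subset[of I "{0..<n}"] by auto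
      then show False using a by (simp add: plucker_empty)
    qed
    then show ?thesis unfolding t_def by auto
  qed
  define dd where "dd a = t (Suc a) * t a" for a
  have prod_dd: "(\<Prod>a<j. dd a) = t j" for j
  proof (induction j)
    case 0 then show ?case using t0 by simp
  next
    case (Suc j)
    have "(\<Prod>a<Suc j. dd a) = t j * (t (Suc j) * t j)" using Suc by (simp add: dd_def)
    also have "\<dots> = t (Suc j) * (t j * t j)" by (simp add: ac_simps)
    finally show ?case using t2 by simp
  qed
  define D where "D = (\<lambda>i j. if i = j then dd i else (0::real))"
  have Dlt: "lower_triangular n D" unfolding lower_triangular_def D_def by auto
  have Dd: "\<forall>a<n. D a a \<noteq> 0" unfolding D_def dd_def using t2 by (auto simp: t_def)
  have Dinv: "mat_invertible n D" using lt_invertible(1)[OF Dlt Dd] .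
  define M' where "M' = mat_mult n D M"
  have sf: "same_flag n M M'" unfolding same_flag_def M'_def using Dinv Dlt by blast
  have nn: "plucker M' I \<ge> 0" if I: "I \<subseteq> {0..<n}" for I
  proof -
    have "plucker M' I = (\<Prod>a<card I. D a a) * plucker M I" unfolding M'_def by (rule lt_plucker[OF Dlt I])
    also have "(\<Prod>a<card I. D a a) = t (card I)" using prod_dd by (simp add: D_def)
    finally show ?thesis using tsgn[OF I] by simp
  qed
  show "P \<in> synthetic_flag_positroids n"
    unfolding synthetic_flag_positroids_def P using inv sf nn by blast
qed

lemma Am_lower: "lower_triangular n (Am n x)"
  unfolding lower_triangular_def Am_def by auto

lemma Am_diag: "x > 0 \<Longrightarrow> \<forall>a<n. Am n x a a \<noteq> 0"
  unfolding Am_def by auto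

lemma sqd_zero: "sqd l j = 0 \<longleftrightarrow> l = j"
  unfolding sqd_def by auto

lemma Gm_tendsto:
  assumes "\<delta> \<longlonglongrightarrow> 0"
  shows "(\<lambda>k. Gm (\<delta> k) l j) \<longlonglongrightarrow> mat_id l j"
proof (cases "l = j")
  case True
  have "sqd j j = 0" by (simp add: sqd_zero)
  then show ?thesis using True unfolding Gm_def mat_id_def by simp
next
  case False
  then have p: "sqd l j > 0" using sqd_zero[of l j] by simp
  have "(\<lambda>k. \<delta> k ^ sqd l j) \<longlonglongrightarrow> 0 ^ sqd l j" by (intro tendsto_intros assms)
  then show ?thesis unfolding Gm_def mat_id_def using False p assms by simp
qed

lemma syn_sub_real: "synthetic_flag_positroids n \<subseteq> realizable_flag_positroids n"
proof
  fix P assume "P \<in> synthetic_flag_positroids n"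
  then obtain M M' where P: "P = nonzero_plucker n M" and inv: "mat_invertible n M"
    and sf: "same_flag n M M'" and nn: "\<forall>I. I \<subseteq> {0..<n} \<longrightarrow> plucker M' I \<ge> 0"
    unfolding synthetic_flag_positroids_def by blast
  from sf obtain L where Linv: "mat_invertible n L" and Llt: "lower_triangular n L"
    and eqL: "\<forall>i<n. \<forall>j<n. M' i j = mat_mult n L M i j"
    unfolding same_flag_def by blast
  have inv': "mat_invertible n M'"
    using eqL by (intro inv_cong[OF _ mm_invertible[OF Linv inv]]) auto
  have samepat: "nonzero_plucker n M' = nonzero_plucker n M"
  proof -
    have "plucker M' I \<noteq> 0 \<longleftrightarrow> plucker M I \<noteq> 0" if I: "I \<subseteq> {0..<n}" for I
    proof -
      have cn: "card I \<le> n" using sorted_facts(3)[OF I] .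
      have "plucker M' I = plucker (mat_mult n L M) I" using eqL I by (intro plucker_cong[of n]) auto
      also have "\<dots> = (\<Prod>a<card I. L a a) * plucker M I" by (rule lt_plucker[OF Llt I])
      finally have e: "plucker M' I = (\<Prod>a<card I. L a a) * plucker M I" .
      have "(\<Prod>a<card I. L a a) \<noteq> 0" using lt_diag_nz[OF Llt Linv] cn by (simp add: prod_zero_iff)
      then show ?thesis using e by simp
    qed
    then show ?thesis unfolding nonzero_plucker_def by blast
  qed
  have evG: "eventually (\<lambda>x. \<forall>C\<in>Pow {0..<n}. plucker (mat_mult n M' (Gm x)) C > 0) (at_right 0)"
    using inv' nn by (intro eventually_ball_finite) (auto intro: G_step)
  then obtain b where b: "b > 0" "\<And>y. 0 < y \<Longrightarrow> y < b \<Longrightarrow> \<forall>C\<in>Pow {0..<n}. plucker (mat_mult n M' (Gm y)) C > 0"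
    using eventually_at_right[of 0 "1::real"] by auto
  define \<delta> where "\<delta> k = b / 2 * inverse (real (Suc k))" for k
  have \<delta>pos: "0 < \<delta> k" "\<delta> k < b" for k
  proof -
    show "0 < \<delta> k" unfolding \<delta>_def using b by simp
    have "inverse (real (Suc k)) \<le> 1" by (auto simp: inverse_le_1_iff)
    then have "\<delta> k \<le> b / 2" unfolding \<delta>_def using b by (simp add: mult_left_le)
    then show "\<delta> k < b" using b by simp
  qed
  have \<delta>lim: "\<delta> \<longlonglongrightarrow> 0"
  proof -
    have "(\<lambda>k. b / 2 * inverse (real (Suc k))) \<longlonglongrightarrow> b / 2 * 0"
      by (intro tendsto_intros LIMSEQ_inverse_real_of_nat)
    then show ?thesis unfolding \<delta>_def by simp
  qed
  define X where "X k = mat_mult n M' (Gm (\<delta> k))" for k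
  have Xpos: "\<forall>C. C \<subseteq> {0..<n} \<longrightarrow> plucker (X k) C > 0" for k
    using b(2)[OF \<delta>pos] unfolding X_def by auto
  have XN: "\<exists>N. totally_positive n N \<and> same_flag n N (X k)" for k
  proof -
    let ?S = "{(R, C). R \<subseteq> {0..<n} \<and> C \<subseteq> {0..<n} \<and> card R = card C}"
    have finS: "finite ?S"
      by (rule finite_subset[of _ "Pow {0..<n} \<times> Pow {0..<n}"]) auto
    have "eventually (\<lambda>x. \<forall>RC\<in>?S. minor_det (mat_mult n (Am n x) (X k)) (card (fst RC))
        (\<lambda>i. sorted_list_of_set (fst RC) ! i) (\<lambda>j. sorted_list_of_set (snd RC) ! j) > 0) (at_right 0)"
    proof (intro eventually_ball_finite finS ballI)
      fix RC assume "RC \<in> ?S"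
      then obtain R C where RC: "RC = (R, C)" "R \<subseteq> {0..<n}" "C \<subseteq> {0..<n}" "card R = card C" by auto
      show "eventually (\<lambda>x. minor_det (mat_mult n (Am n x) (X k)) (card (fst RC))
        (\<lambda>i. sorted_list_of_set (fst RC) ! i) (\<lambda>j. sorted_list_of_set (snd RC) ! j) > 0) (at_right 0)"
        using A_step[OF Xpos RC(2,3,4)] unfolding RC(1) by simp
    qed
    then obtain b' where b': "b' > 0" "\<And>y. 0 < y \<Longrightarrow> y < b' \<Longrightarrow> \<forall>RC\<in>?S. minor_det (mat_mult n (Am n y) (X k)) (card (fst RC))
        (\<lambda>i. sorted_list_of_set (fst RC) ! i) (\<lambda>j. sorted_list_of_set (snd RC) ! j) > 0"
      using eventually_at_right[of 0 "1::real"] by auto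
    define x where "x = b' / 2"
    have x: "0 < x" "x < b'" using b' unfolding x_def by auto
    define N where "N = mat_mult n (Am n x) (X k)"
    have TP: "totally_positive n N"
      unfolding totally_positive_def
    proof (intro allI impI)
      fix R C assume h: "R \<subseteq> {0..<n} \<and> C \<subseteq> {0..<n} \<and> card R = card C \<and> R \<noteq> {}"
      then have "(R, C) \<in> ?S" by auto
      then show "minor_det N (card R) (\<lambda>i. sorted_list_of_set R ! i) (\<lambda>j. sorted_list_of_set C ! j) > 0"
        using b'(2)[OF x] unfolding N_def by fastforce
    qed
    have inv2: "\<forall>i<n. \<forall>j<n. mat_mult n (Am n x) (linv (Am n x)) i j = mat_id i j \<and>
        mat_mult n (linv (Am n x)) (Am n x) i j = mat_id i j"
      using lt_inverse[OF Am_lower Am_diag[OF x(1)]] .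
    have "same_flag n N (X k)"
      unfolding same_flag_def
    proof (intro exI conjI allI impI)
      show "mat_invertible n (linv (Am n x))" using lt_invertible(2)[OF Am_lower Am_diag[OF x(1)]] .
      show "lower_triangular n (linv (Am n x))" by (rule linv_lower)
      fix i j assume ij: "i < n" "j < n"
      have "mat_mult n (linv (Am n x)) N i j = mat_mult n (mat_mult n (linv (Am n x)) (Am n x)) (X k) i j"
        unfolding N_def by (simp add: mm_assoc)
      also have "\<dots> = X k i j" using inv2 ij by (intro mm_left_idc) auto
      finally show "X k i j = mat_mult n (linv (Am n x)) N i j" by simp
    qed
    then show ?thesis using TP by blast
  qed
  have Xlim: "(\<lambda>k. X k i j) \<longlonglongrightarrow> M' i j" if ij: "i < n" "j < n" for i j
  proof -
    have "(\<lambda>k. X k i j) \<longlonglongrightarrow> (\<Sum>l<n. M' i l * mat_id l j)"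
      unfolding X_def mat_mult_def by (intro tendsto_intros Gm_tendsto \<delta>lim)
    also have "(\<Sum>l<n. M' i l * mat_id l j) = M' i j"
      using mm_id_right[OF ij(2), of M' i] unfolding mat_mult_def .
    finally show ?thesis .
  qed
  have "in_tnn_flag n M'"
    unfolding in_tnn_flag_def using inv' XN Xlim by blast
  then show "P \<in> realizable_flag_positroids n"
    unfolding realizable_flag_positroids_def P samepat[symmetric] by blast
qed

theorem mainTheorem5:
  fixes n :: nat
  shows "synthetic_flag_positroids n = realizable_flag_positroids n"
  using syn_sub_real real_sub_syn by blast

end
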